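(* Let $T$ be a tree. If $\Gamma(T)-\gamma(T)<3$, then the domination polynomial $D(T,x)$ is unimodal.
   Context: A dominating set of a graph $G=(V,E)$ is a set $S\subseteq V$ such that every vertex is in $S$ or adjacent to a vertex of $S$; it is minimal if no proper subset is dominating. $\gamma(T)$ is the minimum size of a dominating set and $\Gamma(T)$ the maximum size of a minimal dominating set. For $T$ of order $n$, $D(T,x)=\sum_{i=0}^n d_ix^i$ where $d_i$ is the number of dominating sets of size $i$. A polynomial $a_0+\cdots+a_nx^n$ is unimodal if there is $0\le k\le n$ with $a_0\le\cdots\le a_k\ge a_{k+1}\ge\cdots\ge a_n$. *)

theory Defs
  imports Main
begin

definition simple_graph :: "'a set \<Rightarrow> 'a set set \<Rightarrow> bool" where
  "simple_graph V E \<longleftrightarrow> finite V \<and> (\<forall>e\<in>E. e \<subseteq> V \<and> card e = 2)"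

definition adj :: "'a set set \<Rightarrow> 'a \<Rightarrow> 'a \<Rightarrow> bool" where
  "adj E u v \<longleftrightarrow> {u, v} \<in> E"

definition walk :: "'a set \<Rightarrow> 'a set set \<Rightarrow> 'a list \<Rightarrow> bool" where
  "walk V E p \<longleftrightarrow> p \<noteq> [] \<and> set p \<subseteq> V \<and> (\<forall>i. Suc i < length p \<longrightarrow> adj E (p ! i) (p ! Suc i))"

definition connected_graph :: "'a set \<Rightarrow> 'a set set \<Rightarrow> bool" where
  "connected_graph V E \<longleftrightarrow> V \<noteq> {} \<and>
     (\<forall>u\<in>V. \<forall>v\<in>V. \<exists>p. walk V E p \<and> hd p = u \<and> last p = v)"

definition has_cycle :: "'a set \<Rightarrow> 'a set set \<Rightarrow> bool" where
  "has_cycle V E \<longleftrightarrow> (\<exists>p. walk V E p \<and> length p \<ge> 3 \<and> distinct p \<and> adj E (last p) (hd p))"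

definition is_tree :: "'a set \<Rightarrow> 'a set set \<Rightarrow> bool" where
  "is_tree V E \<longleftrightarrow> simple_graph V E \<and> connected_graph V E \<and> \<not> has_cycle V E"

definition dominating :: "'a set \<Rightarrow> 'a set set \<Rightarrow> 'a set \<Rightarrow> bool" where
  "dominating V E S \<longleftrightarrow> S \<subseteq> V \<and> (\<forall>v\<in>V. v \<in> S \<or> (\<exists>u\<in>S. adj E u v))"

definition minimal_dominating :: "'a set \<Rightarrow> 'a set set \<Rightarrow> 'a set \<Rightarrow> bool" where
  "minimal_dominating V E S \<longleftrightarrow> dominating V E S \<and> (\<forall>S'. S' \<subset> S \<longrightarrow> \<not> dominating V E S')"

definition domination_number :: "'a set \<Rightarrow> 'a set set \<Rightarrow> nat" where
  "domination_number V E = Min (card ` {S. dominating V E S})"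

definition upper_domination_number :: "'a set \<Rightarrow> 'a set set \<Rightarrow> nat" where
  "upper_domination_number V E = Max (card ` {S. minimal_dominating V E S})"

text \<open>d_i = number of dominating sets of size i (coefficients of D(T,x)).\<close>
definition dom_coeff :: "'a set \<Rightarrow> 'a set set \<Rightarrow> nat \<Rightarrow> nat" where
  "dom_coeff V E i = card {S. dominating V E S \<and> card S = i}"

definition unimodal :: "(nat \<Rightarrow> nat) \<Rightarrow> nat \<Rightarrow> bool" where
  "unimodal a n \<longleftrightarrow> (\<exists>k\<le>n. (\<forall>i. i < k \<longrightarrow> a i \<le> a (Suc i)) \<and>
                             (\<forall>i. k \<le> i \<and> i < n \<longrightarrow> a i \<ge> a (Suc i)))"

end

theory Submission imports Defs begin

lemma adj_sym: "adj E u v = adj E v u"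
  by (simp add: adj_def insert_commute)

fun chain :: "'a set set \<Rightarrow> 'a list \<Rightarrow> bool" where
  "chain E [] = True"
| "chain E [x] = True"
| "chain E (x # y # xs) = (adj E x y \<and> chain E (y # xs))"

lemma chain_nth: "chain E p = (\<forall>i. Suc i < length p \<longrightarrow> adj E (p ! i) (p ! Suc i))"
proof (induction E p rule: chain.induct)
  case (3 E x y xs)
  show ?case
  proof
    assume "chain E (x # y # xs)"
    then have a: "adj E x y" and c: "chain E (y # xs)" by auto
    show "\<forall>i. Suc i < length (x # y # xs) \<longrightarrow> adj E ((x # y # xs) ! i) ((x # y # xs) ! Suc i)"
    proof (intro allI impI)
      fix i assume "Suc i < length (x # y # xs)"
      then show "adj E ((x # y # xs) ! i) ((x # y # xs) ! Suc i)"
        using a c 3 by (cases i) auto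
    qed
  next
    assume h: "\<forall>i. Suc i < length (x # y # xs) \<longrightarrow> adj E ((x # y # xs) ! i) ((x # y # xs) ! Suc i)"
    have "adj E x y" using h[rule_format, of 0] by simp
    moreover have "\<forall>i. Suc i < length (y # xs) \<longrightarrow> adj E ((y # xs) ! i) ((y # xs) ! Suc i)"
      using h by (metis Suc_less_eq length_Cons nth_Cons_Suc)
    ultimately show "chain E (x # y # xs)" using 3 by simp
  qed
qed auto

lemma walk_chain: "walk V E p = (p \<noteq> [] \<and> set p \<subseteq> V \<and> chain E p)"
  by (simp add: walk_def chain_nth)

lemma chain_append:
  "chain E (xs @ ys) = (chain E xs \<and> chain E ys \<and> (xs \<noteq> [] \<and> ys \<noteq> [] \<longrightarrow> adj E (last xs) (hd ys)))"
proof (induction xs rule: chain.induct)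
  case (2 E x)
  then show ?case by (cases ys) auto
next
  case (3 E x y xs)
  then show ?case by auto
qed auto

lemma chain_rev: "chain E (rev xs) = chain E xs"
proof (induction xs rule: chain.induct)
  case (3 E x y xs)
  have "chain E (rev (x # y # xs)) = chain E (rev (y # xs) @ [x])" by simp
  also have "\<dots> = (chain E (rev (y # xs)) \<and> adj E y x)" by (subst chain_append) simp
  also have "\<dots> = chain E (x # y # xs)" using 3 adj_sym[of E x y] by auto
  finally show ?case .
qed auto

lemma chain_take: "chain E xs \<Longrightarrow> chain E (take k xs)"
  by (metis append_take_drop_id chain_append)


fun anc :: "('a \<Rightarrow> 'a) \<Rightarrow> nat \<Rightarrow> 'a \<Rightarrow> 'a list" where
  "anc f 0 v = [v]"
| "anc f (Suc k) v = v # anc f k (f v)"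

lemma anc_hd: "anc f k v ! 0 = v"
  by (cases k) auto

locale tree_ctx =
  fixes V :: "'a set" and E :: "'a set set"
  assumes tree: "is_tree V E"
begin

lemma finV: "finite V"
  using tree by (simp add: is_tree_def simple_graph_def)

lemma adj_V: "adj E u v \<Longrightarrow> u \<in> V \<and> v \<in> V"
  using tree unfolding is_tree_def simple_graph_def adj_def by blast

lemma adj_neq: "adj E u v \<Longrightarrow> u \<noteq> v"
  using tree unfolding is_tree_def simple_graph_def adj_def by fastforce

lemma nocyc: "\<not> has_cycle V E"
  using tree by (simp add: is_tree_def)

definition rt :: 'a where "rt = (SOME r. r \<in> V)"

lemma rt_V: "rt \<in> V"
  using tree unfolding is_tree_def connected_graph_def rt_def by (simp add: some_in_eq)

definition dep :: "'a \<Rightarrow> nat" where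
  "dep v = (LEAST k. \<exists>p. walk V E p \<and> hd p = rt \<and> last p = v \<and> length p = Suc k)"

lemma dep_ex:
  assumes "v \<in> V"
  shows "\<exists>p. walk V E p \<and> hd p = rt \<and> last p = v \<and> length p = Suc (dep v)"
proof -
  obtain p where p: "walk V E p" "hd p = rt" "last p = v"
    using tree assms rt_V unfolding is_tree_def connected_graph_def by blast
  then have "length p = Suc (length p - 1)" by (simp add: walk_def)
  then have "\<exists>k p. walk V E p \<and> hd p = rt \<and> last p = v \<and> length p = Suc k" using p by blast
  then show ?thesis unfolding dep_def by (rule LeastI_ex)
qed

lemma dep_le:
  assumes "walk V E p" "hd p = rt" "last p = v"
  shows "dep v \<le> length p - 1"
proof -
  have "length p = Suc (length p - 1)" using assms by (simp add: walk_def)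
  then show ?thesis unfolding dep_def using assms by (intro Least_le) blast
qed

lemma dep_adj:
  assumes "adj E u v"
  shows "dep v \<le> Suc (dep u)"
proof -
  have uv: "u \<in> V" "v \<in> V" using adj_V assms by auto
  obtain p where p: "walk V E p" "hd p = rt" "last p = u" "length p = Suc (dep u)"
    using dep_ex uv by blast
  have "walk V E (p @ [v])" using p assms uv by (auto simp: walk_chain chain_append)
  moreover have "hd (p @ [v]) = rt" using p by (auto simp: walk_def)
  ultimately have "dep v \<le> length (p @ [v]) - 1" using dep_le by fastforce
  then show ?thesis using p by simp
qed

lemma dep0:
  assumes "v \<in> V" "dep v = 0"
  shows "v = rt"
proof -
  obtain p where p: "walk V E p" "hd p = rt" "last p = v" "length p = Suc (dep v)"
    using dep_ex assms by blast
  then obtain a where "p = [a]" using assms by (cases p) auto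
  then show ?thesis using p by simp
qed

lemma par_ex:
  assumes "v \<in> V" "dep v > 0"
  shows "\<exists>w. w \<in> V \<and> adj E w v \<and> Suc (dep w) = dep v"
proof -
  obtain p where p: "walk V E p" "hd p = rt" "last p = v" "length p = Suc (dep v)"
    using dep_ex assms by blast
  define q where "q = butlast p"
  have pq: "p = q @ [v]" using p unfolding q_def walk_def by (metis append_butlast_last_id)
  have qne: "q \<noteq> []" using p assms pq by auto
  have cq: "chain E q" and a: "adj E (last q) v" using p pq qne by (auto simp: walk_chain chain_append)
  have wq: "walk V E q" using p pq qne cq by (auto simp: walk_chain)
  have hq: "hd q = rt" using p pq qne by simp
  have "dep (last q) \<le> length q - 1" using dep_le wq hq by blast
  moreover have "length q = dep v" using p pq by simp
  moreover have "dep v \<le> Suc (dep (last q))" using dep_adj a by blast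
  ultimately have "Suc (dep (last q)) = dep v" using assms by linarith
  moreover have "last q \<in> V" using adj_V a by blast
  ultimately show ?thesis using a by blast
qed

definition par :: "'a \<Rightarrow> 'a" where
  "par v = (SOME w. w \<in> V \<and> adj E w v \<and> Suc (dep w) = dep v)"

lemma par:
  assumes "v \<in> V" "dep v > 0"
  shows "par v \<in> V" "adj E (par v) v" "Suc (dep (par v)) = dep v"
  using someI_ex[OF par_ex[OF assms]] unfolding par_def by auto

lemma anc_props:
  "v \<in> V \<Longrightarrow> dep v = k \<Longrightarrow> length (anc par k v) = Suc k \<and>
     (\<forall>i\<le>k. anc par k v ! i \<in> V \<and> dep (anc par k v ! i) = k - i) \<and> chain E (anc par k v)"
proof (induction k arbitrary: v)
  case 0
  then show ?case by simp
next
  case (Suc k)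
  have pv: "par v \<in> V" "adj E (par v) v" "Suc (dep (par v)) = dep v" using par Suc.prems by auto
  then have IH: "length (anc par k (par v)) = Suc k \<and>
     (\<forall>i\<le>k. anc par k (par v) ! i \<in> V \<and> dep (anc par k (par v) ! i) = k - i) \<and> chain E (anc par k (par v))"
    using Suc by simp
  have l: "length (anc par (Suc k) v) = Suc (Suc k)" using IH by simp
  have n: "\<forall>i\<le>Suc k. anc par (Suc k) v ! i \<in> V \<and> dep (anc par (Suc k) v ! i) = Suc k - i"
  proof (intro allI impI)
    fix i assume "i \<le> Suc k"
    then show "anc par (Suc k) v ! i \<in> V \<and> dep (anc par (Suc k) v ! i) = Suc k - i"
      using IH Suc.prems by (cases i) auto
  qed
  obtain t where t: "anc par k (par v) = par v # t" using anc_hd[of par k "par v"] IH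
    by (cases "anc par k (par v)") auto
  have "chain E (anc par (Suc k) v)" using IH t pv adj_sym[of E "par v" v] by simp
  then show ?case using l n by blast
qed


lemma distinct_dep:
  assumes "length xs = Suc d" "\<forall>i\<le>d. dep (xs ! i) = d - i"
  shows "distinct xs"
proof -
  have "\<forall>i<length xs. \<forall>k<length xs. i \<noteq> k \<longrightarrow> xs ! i \<noteq> xs ! k"
  proof (intro allI impI)
    fix i k assume "i < length xs" "k < length xs" "i \<noteq> k"
    then have "dep (xs ! i) \<noteq> dep (xs ! k)" using assms by auto
    then show "xs ! i \<noteq> xs ! k" by metis
  qed
  then show ?thesis by (simp add: distinct_conv_nth)
qed

lemma cyc_main:
  assumes x: "x \<in> V" and y: "y \<in> V" and xy: "x \<noteq> y" and dx: "dep x = d" and dy: "dep y = d"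
    and M: "(M = [] \<and> adj E y x) \<or> (\<exists>u. M = [u] \<and> u \<in> V \<and> adj E y u \<and> adj E u x \<and> dep u = Suc d)"
  shows "has_cycle V E"
proof -
  define Ax where "Ax = anc par d x"
  define Ay where "Ay = anc par d y"
  have PX: "length Ax = Suc d" "\<forall>i\<le>d. Ax ! i \<in> V \<and> dep (Ax ! i) = d - i" "chain E Ax"
    using anc_props[OF x dx] unfolding Ax_def by auto
  have PY: "length Ay = Suc d" "\<forall>i\<le>d. Ay ! i \<in> V \<and> dep (Ay ! i) = d - i" "chain E Ay"
    using anc_props[OF y dy] unfolding Ay_def by auto
  have "Ax ! d = rt" using PX dep0 by simp
  moreover have "Ay ! d = rt" using PY dep0 by simp
  ultimately have exd: "Ax ! d = Ay ! d" by simp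
  define j where "j = (LEAST i. Ax ! i = Ay ! i)"
  have jle: "j \<le> d" unfolding j_def using exd by (rule Least_le)
  have eqj: "Ax ! j = Ay ! j" unfolding j_def using exd by (rule LeastI)
  have neq: "\<And>i. i < j \<Longrightarrow> Ax ! i \<noteq> Ay ! i" unfolding j_def using not_less_Least by blast
  have x0: "Ax ! 0 = x" unfolding Ax_def by (rule anc_hd)
  have y0: "Ay ! 0 = y" unfolding Ay_def by (rule anc_hd)
  have j0: "j > 0" using eqj x0 y0 xy by (cases j) auto
  define A1 where "A1 = take (Suc j) Ax"
  define A2 where "A2 = take j Ay"
  define C where "C = A1 @ rev A2 @ M"
  have lA1: "length A1 = Suc j" using PX jle unfolding A1_def by simp
  have lA2: "length A2 = j" using PY jle unfolding A2_def by simp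
  have A1n: "\<And>i. i < Suc j \<Longrightarrow> A1 ! i = Ax ! i" unfolding A1_def by simp
  have A2n: "\<And>i. i < j \<Longrightarrow> A2 ! i = Ay ! i" unfolding A2_def by simp
  have lastA1: "last A1 = Ax ! j"
  proof -
    have "A1 \<noteq> []" using lA1 by auto
    then have "last A1 = A1 ! j" using lA1 by (simp add: last_conv_nth)
    then show ?thesis using A1n by simp
  qed
  have lastA2: "last A2 = Ay ! (j - 1)"
  proof -
    have "A2 \<noteq> []" using lA2 j0 by auto
    then have "last A2 = A2 ! (j - 1)" using lA2 by (simp add: last_conv_nth)
    then show ?thesis using A2n j0 by simp
  qed
  have hdA1: "hd A1 = x" using A1n[of 0] x0 lA1 by (cases A1) auto
  have hdA2: "hd A2 = y" using A2n[of 0] y0 lA2 j0 by (cases A2) auto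
  have A2ne: "A2 \<noteq> []" using lA2 j0 by auto
  have cA1: "chain E A1" unfolding A1_def using PX by (simp add: chain_take)
  have cA2: "chain E (rev A2)" unfolding A2_def using PY by (simp add: chain_take chain_rev)
  have "adj E (Ay ! (j - 1)) (Ay ! Suc (j - 1))"
  proof -
    have "\<forall>i<d. adj E (Ay ! i) (Ay ! Suc i)" using PY(3) PY(1) by (simp add: chain_nth)
    moreover have "j - 1 < d" using jle j0 by simp
    ultimately show ?thesis by blast
  qed
  then have junc1: "adj E (last A1) (hd (rev A2 @ M))"
    using lastA1 lastA2 eqj j0 A2ne adj_sym[of E] by (simp add: hd_rev)
  have cM: "chain E (rev A2 @ M)"
    using M cA2 hdA2 A2ne by (auto simp: chain_append last_rev)
  have chC: "chain E C" unfolding C_def using cA1 cM junc1 lA1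
    by (subst chain_append) auto
  have setA1: "set A1 \<subseteq> V" unfolding A1_def using PX
    by (auto simp: in_set_conv_nth)
  have setA2: "set A2 \<subseteq> V" unfolding A2_def using PY
    by (auto simp: in_set_conv_nth)
  have setM: "set M \<subseteq> V" using M by auto
  have setC: "set C \<subseteq> V" unfolding C_def using setA1 setA2 setM by auto
  have dA1: "distinct A1" unfolding A1_def using distinct_dep[OF PX(1)] PX(2) by simp
  have dA2: "distinct A2" unfolding A2_def using distinct_dep[OF PY(1)] PY(2) by simp
  have inA1: "\<And>z. z \<in> set A1 \<Longrightarrow> \<exists>i\<le>j. z = Ax ! i \<and> dep z = d - i"
    using lA1 A1n PX jle by (auto simp: in_set_conv_nth) (metis le_trans less_Suc_eq_le)
  have inA2: "\<And>z. z \<in> set A2 \<Longrightarrow> \<exists>i<j. z = Ay ! i \<and> dep z = d - i"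
    using lA2 A2n PY jle by (auto simp: in_set_conv_nth)
  have disj12: "set A1 \<inter> set A2 = {}"
  proof (rule ccontr)
    assume "set A1 \<inter> set A2 \<noteq> {}"
    then obtain z where z1: "z \<in> set A1" and z2: "z \<in> set A2" by blast
    obtain i where i: "i \<le> j" "z = Ax ! i" "dep z = d - i" using inA1[OF z1] by blast
    obtain k where k: "k < j" "z = Ay ! k" "dep z = d - k" using inA2[OF z2] by blast
    have "i = k" using i k jle by linarith
    then show False using neq[OF k(1)] i k by simp
  qed
  have dM: "distinct M \<and> set M \<inter> set A1 = {} \<and> set M \<inter> set A2 = {}"
  proof (cases "M = []")
    case True then show ?thesis by simp
  next
    case False
    then obtain u where u: "M = [u]" "dep u = Suc d" using M by auto
    have "u \<notin> set A1" using inA1 u by force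
    moreover have "u \<notin> set A2" using inA2 u by force
    ultimately show ?thesis using u by simp
  qed
  have distC: "distinct C" unfolding C_def using dA1 dA2 disj12 dM by auto
  have lenC: "length C \<ge> 3" unfolding C_def using lA1 lA2 j0 by simp
  have hdC: "hd C = x" unfolding C_def using hdA1 lA1 by (cases A1) auto
  have lastC: "adj E (last C) (hd C)"
  proof (cases "M = []")
    case True
    then have "last C = y" unfolding C_def using A2ne hdA2 by (simp add: last_rev)
    then show ?thesis using hdC M True by auto
  next
    case False
    then obtain u where u: "M = [u]" "adj E u x" using M by auto
    then have "last C = u" unfolding C_def by simp
    then show ?thesis using hdC u by simp
  qed
  have "walk V E C" using chC setC lA1 unfolding C_def by (auto simp: walk_chain)
  then show ?thesis unfolding has_cycle_def using distC lenC lastC by blast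
qed

lemma dep_neq: "adj E u v \<Longrightarrow> dep u \<noteq> dep v"
  using cyc_main[of u v "dep u" "[]"] adj_V adj_neq nocyc adj_sym[of E u v] by auto

lemma dep_adj_cases: "adj E u v \<Longrightarrow> dep v = Suc (dep u) \<or> dep u = Suc (dep v)"
  using dep_neq[of u v] dep_adj[of u v] dep_adj[of v u] adj_sym[of E u v] by linarith

lemma one_par:
  assumes "adj E v u" "adj E w u" "v \<noteq> w" "Suc (dep v) = dep u" "Suc (dep w) = dep u"
  shows False
  using cyc_main[of v w "dep v" "[u]"] assms adj_V adj_sym[of E] nocyc by auto


lemma dep_parity: "adj E u v \<Longrightarrow> even (dep u) \<noteq> even (dep v)"
  using dep_adj_cases[of u v] by auto

end

definition rem :: "'a set \<Rightarrow> 'a set set \<Rightarrow> 'a set \<Rightarrow> 'a set" where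
  "rem V E S = {v \<in> S. dominating V E (S - {v})}"

lemma dom_sub: "dominating V E S \<Longrightarrow> S \<subseteq> V"
  by (simp add: dominating_def)

lemma dom_mono: "dominating V E S \<Longrightarrow> S \<subseteq> T \<Longrightarrow> T \<subseteq> V \<Longrightarrow> dominating V E T"
  unfolding dominating_def by blast

lemma gamma_le:
  assumes "finite V" "dominating V E S"
  shows "domination_number V E \<le> card S"
proof -
  have "{S. dominating V E S} \<subseteq> Pow V" using dom_sub by blast
  then have "finite {S. dominating V E S}" using assms(1) by (simp add: finite_subset)
  then show ?thesis unfolding domination_number_def using assms(2) by (intro Min_le) auto
qed

lemma Gamma_ge:
  assumes "finite V" "minimal_dominating V E S"
  shows "card S \<le> upper_domination_number V E"
proof -
  have "{S. minimal_dominating V E S} \<subseteq> Pow V" using dom_sub minimal_dominating_def by blast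
  then have "finite {S. minimal_dominating V E S}" using assms(1) by (simp add: finite_subset)
  then show ?thesis unfolding upper_domination_number_def using assms(2) by (intro Max_ge) auto
qed

lemma indep_le_Gamma:
  assumes fin: "finite V" and noloop: "\<And>v. \<not> adj E v v"
    and IV: "I \<subseteq> V" and ind: "\<forall>x\<in>I. \<forall>y\<in>I. \<not> adj E x y"
  shows "card I \<le> upper_domination_number V E"
proof -
  define F where "F = {J. I \<subseteq> J \<and> J \<subseteq> V \<and> (\<forall>x\<in>J. \<forall>y\<in>J. \<not> adj E x y)}"
  have "F \<subseteq> Pow V" unfolding F_def by blast
  then have finF: "finite F" using fin by (simp add: finite_subset)
  have IF: "I \<in> F" unfolding F_def using IV ind by auto
  define m where "m = Max (card ` F)"
  have "m \<in> card ` F" unfolding m_def using finF IF by (intro Max_in) auto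
  then obtain J where JF: "J \<in> F" and cJ: "card J = m" by auto
  have maxJ: "\<And>K. K \<in> F \<Longrightarrow> card K \<le> card J" using cJ finF unfolding m_def by auto
  have JV: "J \<subseteq> V" and IJ: "I \<subseteq> J" and indJ: "\<forall>x\<in>J. \<forall>y\<in>J. \<not> adj E x y" using JF unfolding F_def by auto
  have finJ: "finite J" using finite_subset[OF JV fin] .
  have domJ: "dominating V E J" unfolding dominating_def
  proof (intro conjI JV ballI)
    fix v assume v: "v \<in> V"
    show "v \<in> J \<or> (\<exists>u\<in>J. adj E u v)"
    proof (rule ccontr)
      assume "\<not> (v \<in> J \<or> (\<exists>u\<in>J. adj E u v))"
      then have nv: "v \<notin> J" and na: "\<forall>u\<in>J. \<not> adj E u v" by auto
      have na2: "\<forall>u\<in>J. \<not> adj E v u" using na adj_sym[of E v] by blast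
      have "insert v J \<in> F" unfolding F_def using IJ JV v indJ na na2 noloop by auto
      then have "card (insert v J) \<le> card J" by (rule maxJ)
      then show False using nv finJ by simp
    qed
  qed
  have "minimal_dominating V E J" unfolding minimal_dominating_def
  proof (intro conjI domJ allI impI)
    fix S' assume "S' \<subset> J"
    then obtain j where j: "j \<in> J" "j \<notin> S'" by blast
    show "\<not> dominating V E S'"
    proof
      assume "dominating V E S'"
      then have "j \<in> S' \<or> (\<exists>u\<in>S'. adj E u j)" using j JV unfolding dominating_def by blast
      then show False using j indJ \<open>S' \<subset> J\<close> by blast
    qed
  qed
  then have "card J \<le> upper_domination_number V E" using Gamma_ge[OF fin] by blast
  moreover have "card I \<le> card J" using card_mono[OF finJ IJ] .
  ultimately show ?thesis by simp
qed

context tree_ctx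
begin

lemma noloop: "\<not> adj E v v"
  using adj_neq by blast

lemma dom_fin: "dominating V E S \<Longrightarrow> finite S"
  using finite_subset[OF dom_sub finV] by simp

lemma partner:
  assumes domS: "dominating V E S" and v: "v \<in> rem V E S" and w: "w \<in> rem V E S" and wv: "w \<noteq> v"
    and nd: "\<not> dominating V E (S - {v} - {w})" and dl: "dep w \<le> dep v"
  shows "(adj E w v \<and> Suc (dep w) = dep v) \<or>
         (\<exists>u. u \<in> V \<and> u \<notin> S \<and> adj E u v \<and> adj E w u \<and> Suc (dep u) = dep v \<and> (\<forall>z\<in>S. adj E z u \<longrightarrow> z = v \<or> z = w))"
proof -
  have SV: "S \<subseteq> V" using domS dom_sub by blast
  obtain u where u: "u \<in> V" "u \<notin> S - {v} - {w}" "\<not> (\<exists>z\<in>S - {v} - {w}. adj E z u)"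
    using nd SV unfolding dominating_def by blast
  have dv: "dominating V E (S - {v})" using v unfolding rem_def by blast
  have dw: "dominating V E (S - {w})" using w unfolding rem_def by blast
  have uw: "u = w \<or> adj E w u" using dv u unfolding dominating_def by blast
  have uv: "u = v \<or> adj E v u" using dw u unfolding dominating_def by blast
  show ?thesis
  proof (cases "u = v \<or> u = w")
    case True
    then have a: "adj E w v" using uw uv wv adj_sym[of E v w] by auto
    have "Suc (dep w) = dep v" using dep_adj_cases[OF a] dl by linarith
    with a show ?thesis by (intro disjI1 conjI)
  next
    case False
    have a1: "adj E v u" using uv False by blast
    have a2: "adj E w u" using uw False by blast
    have uS: "u \<notin> S" using u(2) False by blast
    have "Suc (dep u) = dep v"
    proof (rule ccontr)
      assume "Suc (dep u) \<noteq> dep v"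
      then have du: "dep u = Suc (dep v)" using dep_adj_cases[OF a1] by linarith
      then have dw': "dep u = Suc (dep w)" using dep_adj_cases[OF a2] dl by linarith
      have "v \<noteq> w" using wv by blast
      moreover have "Suc (dep v) = dep u" using du by simp
      moreover have "Suc (dep w) = dep u" using dw' by simp
      ultimately show False by (rule one_par[OF a1 a2])
    qed
    moreover have "\<forall>z\<in>S. adj E z u \<longrightarrow> z = v \<or> z = w" using u by blast
    moreover have "adj E u v" using a1 adj_sym[of E u v] by simp
    ultimately have "u \<in> V \<and> u \<notin> S \<and> adj E u v \<and> adj E w u \<and> Suc (dep u) = dep v \<and> (\<forall>z\<in>S. adj E z u \<longrightarrow> z = v \<or> z = w)"
      using a2 uS u(1) by simp
    then show ?thesis by (intro disjI2 exI)
  qed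
qed

lemma L1:
  assumes "dominating V E S"
  shows "card (rem V E S) + 2 * domination_number V E \<le> 2 * card S"
  using assms
proof (induction "card S" arbitrary: S rule: less_induct)
  case less
  have finS: "finite S" using dom_fin[OF less.prems] .
  have gS: "domination_number V E \<le> card S" using gamma_le finV less.prems by blast
  have remS: "rem V E S \<subseteq> S" unfolding rem_def by blast
  have finR: "finite (rem V E S)" using finite_subset[OF remS finS] .
  show ?case
  proof (cases "rem V E S = {}")
    case True
    then show ?thesis using gS by simp
  next
    case False
    define mx where "mx = Max (dep ` rem V E S)"
    have "mx \<in> dep ` rem V E S" unfolding mx_def using False finR by (intro Max_in) auto
    then obtain v where v: "v \<in> rem V E S" "dep v = mx" by auto
    have vmax: "\<And>w. w \<in> rem V E S \<Longrightarrow> dep w \<le> dep v" using v finR unfolding mx_def by auto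
    define S' where "S' = S - {v}"
    have domS': "dominating V E S'" using v unfolding rem_def S'_def by blast
    have vS: "v \<in> S" using v remS by blast
    have cS': "card S' < card S" unfolding S'_def using vS finS card_gt_0_iff[of S] by auto
    have IH: "card (rem V E S') + 2 * domination_number V E \<le> 2 * card S'"
      using less.hyps[OF cS' domS'] .
    define Q where "Q = {w \<in> rem V E S - {v}. \<not> dominating V E (S - {v} - {w})}"
    have sub: "rem V E S \<subseteq> insert v (rem V E S' \<union> Q)"
      unfolding Q_def rem_def S'_def by blast
    have finQ: "finite Q" unfolding Q_def using finR by simp
    have "\<forall>a\<in>Q. \<forall>b\<in>Q. a = b"
    proof (intro ballI, rule ccontr)
      fix a b assume aQ: "a \<in> Q" and bQ: "b \<in> Q" and ab: "a \<noteq> b"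
      have aR: "a \<in> rem V E S" "a \<noteq> v" "\<not> dominating V E (S - {v} - {a})" using aQ unfolding Q_def by auto
      have bR: "b \<in> rem V E S" "b \<noteq> v" "\<not> dominating V E (S - {v} - {b})" using bQ unfolding Q_def by auto
      have aS: "a \<in> S" and bS: "b \<in> S" using aR bR remS by auto
      note pa = partner[OF less.prems v(1) aR(1) aR(2) aR(3) vmax[OF aR(1)]]
      note pb = partner[OF less.prems v(1) bR(1) bR(2) bR(3) vmax[OF bR(1)]]
      show False
      proof (cases "adj E a v \<and> Suc (dep a) = dep v")
        case A: True
        show False
        proof (cases "adj E b v \<and> Suc (dep b) = dep v")
          case True
          then show False using one_par[of a v b] A ab by blast
        next
          case False
          then obtain ub where ub: "ub \<notin> S" "adj E ub v" "Suc (dep ub) = dep v" using pb by blast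
          have "a \<noteq> ub" using aS ub by blast
          then show False using one_par[of a v ub] A ub by blast
        qed
      next
        case nA: False
        then obtain ua where ua: "ua \<notin> S" "adj E ua v" "Suc (dep ua) = dep v" "adj E a ua"
          "\<forall>z\<in>S. adj E z ua \<longrightarrow> z = v \<or> z = a" using pa by blast
        show False
        proof (cases "adj E b v \<and> Suc (dep b) = dep v")
          case True
          have "b \<noteq> ua" using bS ua by blast
          then show False using one_par[of b v ua] True ua by blast
        next
          case False
          then obtain ub where ub: "ub \<notin> S" "adj E ub v" "Suc (dep ub) = dep v" "adj E b ub" using pb by blast
          show False
          proof (cases "ua = ub")
            case True
            then show False using ua(5) bS ub(4) bR(2) ab by auto
          next
            case False
            then show False using one_par[of ua v ub] ua ub by blast
          qed
        qed
      qed
    qed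
    then have cQ: "card Q \<le> 1" using finQ card_le_Suc0_iff_eq by auto
    have finR': "finite (rem V E S')" using dom_fin[OF domS'] unfolding rem_def by simp
    have "card (rem V E S) \<le> card (insert v (rem V E S' \<union> Q))"
      using sub finR' finQ by (intro card_mono) auto
    also have "\<dots> \<le> Suc (card (rem V E S' \<union> Q))"
      using finR' finQ by (simp add: card_insert_if)
    also have "\<dots> \<le> Suc (card (rem V E S') + card Q)"
      using card_Un_le[of "rem V E S'" Q] by simp
    finally have "card (rem V E S) \<le> card (rem V E S') + 2" using cQ by simp
    moreover have "card S' = card S - 1" unfolding S'_def using vS finS by simp
    ultimately show ?thesis using IH cS' by linarith
  qed
qed


lemma card_split: "finite S \<Longrightarrow> card {x\<in>S. Q x} + card {x\<in>S. \<not> Q x} = card S"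
proof -
  assume f: "finite S"
  have "S = {x\<in>S. Q x} \<union> {x\<in>S. \<not> Q x}" by blast
  moreover have "card ({x\<in>S. Q x} \<union> {x\<in>S. \<not> Q x}) = card {x\<in>S. Q x} + card {x\<in>S. \<not> Q x}"
    using f by (intro card_Un_disjoint) auto
  ultimately show ?thesis by simp
qed

lemma L2:
  assumes domS: "dominating V E S"
  shows "2 * card S \<le> card (rem V E S) + 2 * upper_domination_number V E"
proof -
  have SV: "S \<subseteq> V" using dom_sub[OF domS] .
  have finS: "finite S" using dom_fin[OF domS] .
  define P where "P = S - rem V E S"
  define pi where "pi a = (SOME u. u \<in> V \<and> u \<notin> S - {a} \<and> \<not> (\<exists>z\<in>S - {a}. adj E z u))" for a
  have piP: "pi a \<in> V \<and> pi a \<notin> S - {a} \<and> \<not> (\<exists>z\<in>S - {a}. adj E z (pi a))" if a: "a \<in> P" for a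
  proof -
    have "\<not> dominating V E (S - {a})" using a unfolding P_def rem_def by blast
    moreover have "S - {a} \<subseteq> V" using SV by blast
    ultimately have "\<exists>u. u \<in> V \<and> u \<notin> S - {a} \<and> \<not> (\<exists>z\<in>S - {a}. adj E z u)"
      unfolding dominating_def by blast
    then show ?thesis unfolding pi_def by (rule someI_ex)
  qed
  have PS: "P \<subseteq> S" unfolding P_def by blast
  have piN: "pi a = a \<or> (adj E a (pi a) \<and> pi a \<notin> S)" if a: "a \<in> P" for a
  proof -
    have h: "pi a \<in> V" "pi a \<notin> S - {a}" "\<not> (\<exists>z\<in>S - {a}. adj E z (pi a))" using piP[OF a] by auto
    have "pi a \<in> S \<or> (\<exists>z\<in>S. adj E z (pi a))" using domS h(1) unfolding dominating_def by blast
    then show ?thesis using h by blast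
  qed
  have noadj: "\<not> adj E z (pi a) \<and> \<not> adj E (pi a) z" if "a \<in> P" "z \<in> S" "z \<noteq> a" for a z
  proof -
    have "\<not> adj E z (pi a)" using piP[OF that(1)] that(2,3) by blast
    then show ?thesis using adj_sym[of E z "pi a"] by simp
  qed
  have piS: "pi a \<in> S \<Longrightarrow> pi a = a" if "a \<in> P" for a using piN[OF that] by blast
  have piPar: "pi a \<notin> S \<Longrightarrow> even (dep (pi a)) \<noteq> even (dep a)" if "a \<in> P" for a
    using piN[OF that] dep_parity[of a "pi a"] PS that by auto
  have inj: "inj_on pi P"
  proof (rule inj_onI)
    fix a a' assume a: "a \<in> P" and a': "a' \<in> P" and eq: "pi a = pi a'"
    show "a = a'"
    proof (rule ccontr)
      assume ne: "a \<noteq> a'"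
      have "a' \<in> S" using a' PS by blast
      then have n1: "\<not> adj E a' (pi a)" and n2: "pi a \<noteq> a'" using piP[OF a] ne by auto
      then show False using piN[OF a'] eq by auto
    qed
  qed
  define I where "I b = {v\<in>S. even (dep v) = b} \<union> pi ` {a\<in>P. even (dep a) \<noteq> b}" for b
  have finP: "finite P" using finite_subset[OF PS finS] .
  have cardI: "card (I b) = card {v\<in>S. even (dep v) = b} + card {a\<in>P. even (dep a) \<noteq> b}" for b
  proof -
    have disj: "{v\<in>S. even (dep v) = b} \<inter> pi ` {a\<in>P. even (dep a) \<noteq> b} = {}"
    proof (rule ccontr)
      assume "{v\<in>S. even (dep v) = b} \<inter> pi ` {a\<in>P. even (dep a) \<noteq> b} \<noteq> {}"
      then obtain a where a: "a \<in> P" "even (dep a) \<noteq> b" "pi a \<in> S" "even (dep (pi a)) = b" by blast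
      then show False using piS[OF a(1) a(3)] by simp
    qed
    have "card (I b) = card {v\<in>S. even (dep v) = b} + card (pi ` {a\<in>P. even (dep a) \<noteq> b})"
      unfolding I_def using disj finS finP by (intro card_Un_disjoint) auto
    moreover have "card (pi ` {a\<in>P. even (dep a) \<noteq> b}) = card {a\<in>P. even (dep a) \<noteq> b}"
      using inj by (intro card_image) (rule inj_on_subset, auto)
    ultimately show ?thesis by simp
  qed
  have IV: "I b \<subseteq> V" for b
    unfolding I_def using SV piP by auto
  have indI: "\<forall>x\<in>I b. \<forall>y\<in>I b. \<not> adj E x y" for b
  proof (intro ballI notI)
    fix x y assume x: "x \<in> I b" and y: "y \<in> I b" and xy: "adj E x y"
    have par: "even (dep x) \<noteq> even (dep y)" using dep_parity[OF xy] .
    show False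
    proof (cases "x \<in> S \<and> even (dep x) = b")
      case xS: True
      show False
      proof (cases "y \<in> S \<and> even (dep y) = b")
        case True
        then show False using xS par by simp
      next
        case False
        then obtain a where a: "a \<in> P" "even (dep a) \<noteq> b" "y = pi a" using y unfolding I_def by blast
        show False
        proof (cases "x = a")
          case True then show False using xS a by simp
        next
          case False then show False using noadj[OF a(1)] xS a(3) xy by blast
        qed
      qed
    next
      case xN: False
      then obtain a where a: "a \<in> P" "even (dep a) \<noteq> b" "x = pi a" using x unfolding I_def by blast
      show False
      proof (cases "y \<in> S \<and> even (dep y) = b")
        case yS: True
        show False
        proof (cases "y = a")
          case True then show False using yS a by simp
        next
          case False then show False using noadj[OF a(1)] yS a(3) xy by blast
        qed
      next
        case False
        then obtain a' where a': "a' \<in> P" "even (dep a') \<noteq> b" "y = pi a'" using y unfolding I_def by blast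
        show False
        proof (cases "a = a'")
          case True then show False using a a' xy noloop by simp
        next
          case ne: False
          show False
          proof (cases "pi a' \<in> S")
            case True
            then have "pi a' = a'" using piS[OF a'(1)] by blast
            moreover have "a' \<in> S" using a'(1) PS by blast
            ultimately show False using noadj[OF a(1), of a'] ne xy a a' by auto
          next
            case n': False
            show False
            proof (cases "pi a \<in> S")
              case True
              then have "pi a = a" using piS[OF a(1)] by blast
              moreover have "a \<in> S" using a(1) PS by blast
              ultimately show False using noadj[OF a'(1), of a] ne xy a a' by auto
            next
              case False
              have "even (dep x) = b" using piPar[OF a(1) False] a by auto
              moreover have "even (dep y) = b" using piPar[OF a'(1) n'] a' by auto
              ultimately show False using par by simp
            qed
          qed
        qed
      qed
    qed
  qed
  have G: "card (I b) \<le> upper_domination_number V E" for b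
    using indep_le_Gamma[OF finV _ IV indI] noloop by blast
  have s1: "card {v\<in>S. even (dep v) = True} + card {v\<in>S. even (dep v) = False} = card S"
    using card_split[OF finS, of "\<lambda>v. even (dep v)"] by simp
  have s2: "card {a\<in>P. even (dep a) \<noteq> True} + card {a\<in>P. even (dep a) \<noteq> False} = card P"
    using card_split[OF finP, of "\<lambda>v. \<not> even (dep v)"] by simp
  have cP: "card P = card S - card (rem V E S)"
    unfolding P_def using finS by (intro card_Diff_subset) (auto simp: rem_def intro: finite_subset)
  have rS: "card (rem V E S) \<le> card S" using finS by (intro card_mono) (auto simp: rem_def)
  have "card (I True) + card (I False) \<le> 2 * upper_domination_number V E" using G[of True] G[of False] by simp
  then show ?thesis using cardI[of True] cardI[of False] s1 s2 cP rS by linarith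
qed

end

lemma double_count:
  fixes V :: "'a set" and E :: "'a set set"
  assumes fin: "finite V" and i: "i < card V"
  shows "(card V - i) * dom_coeff V E i = (\<Sum>S\<in>{S. dominating V E S \<and> card S = Suc i}. card (rem V E S))"
proof -
  define D where "D k = {S. dominating V E S \<and> card S = k}" for k
  have finD: "finite (D k)" for k
  proof -
    have "D k \<subseteq> Pow V" unfolding D_def using dom_sub by blast
    then show ?thesis using fin by (simp add: finite_subset)
  qed
  define A where "A = Sigma (D i) (\<lambda>T. V - T)"
  define B where "B = Sigma (D (Suc i)) (\<lambda>S. rem V E S)"
  have cA: "card A = (\<Sum>T\<in>D i. card (V - T))" unfolding A_def
    using finD fin by (intro card_SigmaI) auto
  have "(\<Sum>T\<in>D i. card (V - T)) = (\<Sum>T\<in>D i. card V - i)"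
  proof (rule sum.cong)
    fix T assume "T \<in> D i"
    then have "T \<subseteq> V" "card T = i" unfolding D_def using dom_sub by auto
    then show "card (V - T) = card V - i" using fin by (simp add: card_Diff_subset finite_subset)
  qed simp
  then have cA2: "card A = (card V - i) * card (D i)" using cA by simp
  have cB: "card B = (\<Sum>S\<in>D (Suc i). card (rem V E S))" unfolding B_def
  proof (intro card_SigmaI ballI)
    show "finite (D (Suc i))" by (rule finD)
  next
    fix S assume "S \<in> D (Suc i)"
    then have "S \<subseteq> V" unfolding D_def using dom_sub by auto
    then show "finite (rem V E S)" using fin unfolding rem_def by (auto intro: finite_subset)
  qed
  define f where "f = (\<lambda>(T :: 'a set, v :: 'a). (insert v T, v))"
  define g where "g = (\<lambda>(S :: 'a set, v :: 'a). (S - {v}, v))"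
  have "bij_betw f A B"
  proof (rule bij_betw_byWitness[where f' = g])
    show "\<forall>a\<in>A. g (f a) = a" unfolding A_def f_def g_def by auto
    show "\<forall>a'\<in>B. f (g a') = a'" unfolding B_def f_def g_def rem_def by auto
    show "f ` A \<subseteq> B"
    proof
      fix x assume "x \<in> f ` A"
      then obtain T v where T: "T \<in> D i" "v \<in> V" "v \<notin> T" and x: "x = (insert v T, v)"
        unfolding A_def f_def by auto
      have dT: "dominating V E T" and cT: "card T = i" using T unfolding D_def by auto
      have TV: "T \<subseteq> V" using dom_sub[OF dT] .
      have finT: "finite T" using finite_subset[OF TV fin] .
      have "dominating V E (insert v T)" using dom_mono[OF dT] TV T(2) by blast
      moreover have "card (insert v T) = Suc i" using finT T(3) cT by simp
      moreover have "v \<in> rem V E (insert v T)" unfolding rem_def using dT T(3) by simp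
      ultimately show "x \<in> B" unfolding B_def D_def x by simp
    qed
    show "g ` B \<subseteq> A"
    proof
      fix x assume "x \<in> g ` B"
      then obtain S v where S: "S \<in> D (Suc i)" "v \<in> rem V E S" and x: "x = (S - {v}, v)"
        unfolding B_def g_def by auto
      have dS: "dominating V E S" and cS: "card S = Suc i" using S unfolding D_def by auto
      have vS: "v \<in> S" and d': "dominating V E (S - {v})" using S(2) unfolding rem_def by auto
      have SV: "S \<subseteq> V" using dom_sub[OF dS] .
      have finS: "finite S" using finite_subset[OF SV fin] .
      have "card (S - {v}) = i" using cS vS finS by simp
      moreover have "v \<in> V - (S - {v})" using vS SV by auto
      ultimately show "x \<in> A" unfolding A_def D_def x using d' by simp
    qed
  qed
  then have "card A = card B" by (rule bij_betw_same_card)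
  then show ?thesis using cA2 cB unfolding dom_coeff_def D_def by simp
qed

lemma unimodal_crit:
  fixes d :: "nat \<Rightarrow> nat"
  assumes inc: "\<And>i. i < n \<Longrightarrow> 3 * i + 2 \<le> n + 2 * g \<Longrightarrow> d i \<le> d (Suc i)"
    and dec: "\<And>i. i < n \<Longrightarrow> n + 2 * g + 4 \<le> 3 * i + 2 \<Longrightarrow> d (Suc i) \<le> d i"
  shows "unimodal d n"
proof -
  define k where "k = (LEAST i. n \<le> i \<or> \<not> d i \<le> d (Suc i))"
  have kex: "n \<le> k \<or> \<not> d k \<le> d (Suc k)" unfolding k_def by (rule LeastI[of _ n]) simp
  have kle: "k \<le> n" unfolding k_def by (rule Least_le) simp
  have below: "\<And>i. i < k \<Longrightarrow> d i \<le> d (Suc i)"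
    using not_less_Least[of _ "\<lambda>i. n \<le> i \<or> \<not> d i \<le> d (Suc i)"] unfolding k_def by blast
  have above: "\<And>i. k \<le> i \<Longrightarrow> i < n \<Longrightarrow> d (Suc i) \<le> d i"
  proof -
    fix i assume ki: "k \<le> i" and "i < n"
    then have kn: "k < n" by simp
    then have nk: "\<not> d k \<le> d (Suc k)" using kex by simp
    show "d (Suc i) \<le> d i"
    proof (cases "i = k")
      case True then show ?thesis using nk by simp
    next
      case False
      have "\<not> 3 * k + 2 \<le> n + 2 * g" using inc[OF kn] nk by blast
      then have "n + 2 * g + 4 \<le> 3 * i + 2" using ki False by linarith
      then show ?thesis using dec \<open>i < n\<close> by blast
    qed
  qed
  show ?thesis unfolding unimodal_def using kle below above by blast
qed

theorem corollary4p12: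
  fixes V :: "'a set" and E :: "'a set set"
  assumes "is_tree V E"
    and "upper_domination_number V E - domination_number V E < 3"
  shows "unimodal (dom_coeff V E) (card V)"
proof -
  interpret tree_ctx V E using assms(1) by unfold_locales
  define n where "n = card V"
  define g where "g = domination_number V E"
  define G where "G = upper_domination_number V E"
  have Gg: "G \<le> g + 2" using assms(2) unfolding G_def g_def by linarith
  define DD where "DD i = {S. dominating V E S \<and> card S = i}" for i
  have dc: "dom_coeff V E i = card (DD i)" for i unfolding dom_coeff_def DD_def by simp
  have finDD: "finite (DD i)" for i
  proof -
    have "DD i \<subseteq> Pow V" unfolding DD_def using dom_sub by blast
    then show ?thesis using finV by (simp add: finite_subset)
  qed
  have F0: "(n - i) * dom_coeff V E i = (\<Sum>S\<in>DD (Suc i). card (rem V E S))" if "i < n" for i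
    using double_count[OF finV, of i] that unfolding n_def DD_def by simp
  show ?thesis unfolding n_def[symmetric]
  proof (rule unimodal_crit[where g = g])
    fix i assume i: "i < n" and c: "3 * i + 2 \<le> n + 2 * g"
    have "\<forall>S\<in>DD (Suc i). card (rem V E S) \<le> n - i"
    proof
      fix S assume "S \<in> DD (Suc i)"
      then have "dominating V E S" "card S = Suc i" unfolding DD_def by auto
      then have "card (rem V E S) + 2 * g \<le> 2 * Suc i" using L1 unfolding g_def by metis
      then show "card (rem V E S) \<le> n - i" using c i by simp
    qed
    then have "(\<Sum>S\<in>DD (Suc i). card (rem V E S)) \<le> card (DD (Suc i)) * (n - i)"
      using sum_bounded_above[of "DD (Suc i)" "\<lambda>S. card (rem V E S)" "n - i"] by auto
    then have "(n - i) * dom_coeff V E i \<le> (n - i) * dom_coeff V E (Suc i)"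
      using F0[OF i] dc[of "Suc i"] by (simp add: mult.commute)
    then show "dom_coeff V E i \<le> dom_coeff V E (Suc i)" using i by simp
  next
    fix i assume i: "i < n" and c: "n + 2 * g + 4 \<le> 3 * i + 2"
    have "\<forall>S\<in>DD (Suc i). n - i \<le> card (rem V E S)"
    proof
      fix S assume "S \<in> DD (Suc i)"
      then have "dominating V E S" "card S = Suc i" unfolding DD_def by auto
      then have "2 * Suc i \<le> card (rem V E S) + 2 * G" using L2 unfolding G_def by metis
      then show "n - i \<le> card (rem V E S)" using c Gg i by simp
    qed
    then have "card (DD (Suc i)) * (n - i) \<le> (\<Sum>S\<in>DD (Suc i). card (rem V E S))"
      using sum_bounded_below[of "DD (Suc i)" "n - i" "\<lambda>S. card (rem V E S)"] by auto
    then have "(n - i) * dom_coeff V E (Suc i) \<le> (n - i) * dom_coeff V E i"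
      using F0[OF i] dc[of "Suc i"] by (simp add: mult.commute)
    then show "dom_coeff V E (Suc i) \<le> dom_coeff V E i" using i by simp
  qed
qed

end
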